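(* Let $M,N\ge 0$ be integers, $a_0,\dots,a_M\in\mathbb{R}$, $f_M(x)=\sum_{m=0}^M a_mT_m(x)$, and set $a_{M+1}=a_{M+2}=0$. For $0\le n\le N$ and $y\in[-1,1]$ let $\tilde R_n(y)=\int_{-1}^{y}f_M(y-1-t)T_n(t)\,\mathrm{d}t$, and let $R=(R_{k,n})$, $0\le k\le M+N+1$, $0\le n\le N$, be the matrix of Chebyshev coefficients defined by $\tilde R_n(y)=\sum_{k=0}^{M+N+1}R_{k,n}T_k(y)$. Then the zeroth column of $R$ is $$R_{k,0}=\begin{cases}0, & k>M+1,\\[1mm] \dfrac{a_{k-1}-a_{k+1}}{2k}, & 2\le k\le M+1,\\[2mm] a_0-\dfrac{a_2}{2}, & k=1,\\[2mm] \displaystyle\sum_{j=1}^{M+1}(-1)^{j+1}R_{j,0}, & k=0.\end{cases}$$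
   Context: $T_m(x)=\cos(m\arccos x)$ is the $m$-th Chebyshev polynomial. Each $\tilde R_n$ is a polynomial in $y$ of degree at most $M+n+1\le M+N+1$, so the coefficients $R_{k,n}$ are well defined, with $R_{k,n}=0$ for $k>M+n+1$. The matrix $R$ is called the (Chebyshev) convolution matrix of $f_M$. *)

theory Defs
  imports "HOL-Analysis.Analysis"
begin

text \<open>Chebyshev polynomial of the first kind, as in the paper: T_m(x) = cos(m arccos x)
  (used only on [-1,1]).\<close>
definition cheb :: "nat \<Rightarrow> real \<Rightarrow> real" where
  "cheb m x = cos (real m * arccos x)"

definition fM :: "nat \<Rightarrow> (nat \<Rightarrow> real) \<Rightarrow> real \<Rightarrow> real" where
  "fM M a x = (\<Sum>m\<le>M. a m * cheb m x)"

definition Rtilde :: "nat \<Rightarrow> (nat \<Rightarrow> real) \<Rightarrow> nat \<Rightarrow> real \<Rightarrow> real" where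
  "Rtilde M a n y = integral {-1..y} (\<lambda>t. fM M a (y - 1 - t) * cheb n t)"

end

theory Submission
  imports Defs "HOL-Computational_Algebra.Polynomial"
begin


fun chebp :: "nat \<Rightarrow> real poly" where
  "chebp 0 = 1"
| "chebp (Suc 0) = [:0, 1:]"
| "chebp (Suc (Suc n)) = pCons 0 (smult 2 (chebp (Suc n))) - chebp n"

lemma cos_rec: "cos (real (Suc (Suc n)) * t) = 2 * cos t * cos (real (Suc n) * t) - cos (real n * t)"
proof -
  have "cos (real (Suc (Suc n)) * t) = cos (real (Suc n) * t + t)" by (simp add: algebra_simps)
  moreover have "cos (real n * t) = cos (real (Suc n) * t - t)" by (simp add: algebra_simps)
  ultimately show ?thesis by (simp add: cos_add cos_diff)
qed

lemma chebp_cos: "poly (chebp n) (cos t) = cos (real n * t)"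
proof (induction n rule: chebp.induct)
  case (3 n)
  then show ?case by (simp only: chebp.simps poly_diff poly_pCons poly_smult cos_rec)
qed simp_all

lemma chebp_coeff: "(\<forall>j>n. coeff (chebp n) j = 0) \<and> coeff (chebp n) n = (if n = 0 then 1 else 2 ^ (n - 1))"
proof (induction n rule: chebp.induct)
  case 1 then show ?case by simp
next
  case 2 then show ?case by (auto simp: coeff_pCons split: nat.splits)
next
  case (3 n)
  have c: "coeff (chebp (Suc (Suc n))) (Suc i) = 2 * coeff (chebp (Suc n)) i - coeff (chebp n) (Suc i)" for i
    by simp
  show ?case
  proof (intro conjI allI impI)
    fix j assume j: "Suc (Suc n) < j"
    then obtain i where i: "j = Suc i" by (cases j) auto
    show "coeff (chebp (Suc (Suc n))) j = 0" using 3 j unfolding i c by auto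
  next
    show "coeff (chebp (Suc (Suc n))) (Suc (Suc n)) = (if Suc (Suc n) = 0 then 1 else 2 ^ (Suc (Suc n) - 1))"
      using 3 unfolding c by auto
  qed
qed

lemma chebp_high: "n < j \<Longrightarrow> coeff (chebp n) j = 0"
  using chebp_coeff by auto

lemma chebp_lead: "coeff (chebp n) n \<noteq> 0"
  using chebp_coeff[of n] by (auto split: if_splits)

lemma cheb_unique: "(\<Sum>k\<le>K. smult (c k) (chebp k)) = 0 \<Longrightarrow> k \<le> K \<Longrightarrow> c k = 0"
proof (induction K arbitrary: k)
  case 0 then show ?case using chebp_lead[of 0] by simp
next
  case (Suc K)
  have h: "coeff (\<Sum>k\<le>Suc K. smult (c k) (chebp k)) (Suc K) = c (Suc K) * coeff (chebp (Suc K)) (Suc K)"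
    by (simp add: coeff_sum chebp_high)
  have "c (Suc K) * coeff (chebp (Suc K)) (Suc K) = 0" using h Suc.prems(1) by (metis coeff_0)
  then have cK: "c (Suc K) = 0" using chebp_lead[of "Suc K"] by simp
  have "(\<Sum>k\<le>Suc K. smult (c k) (chebp k)) = (\<Sum>k\<le>K. smult (c k) (chebp k)) + smult (c (Suc K)) (chebp (Suc K))"
    by (rule sum.atMost_Suc)
  then have z: "(\<Sum>k\<le>K. smult (c k) (chebp k)) = 0" using Suc.prems(1) cK by simp
  show ?case
  proof (cases "k = Suc K")
    case True then show ?thesis using cK by simp
  next
    case False then have "k \<le> K" using Suc.prems(2) by simp
    then show ?thesis using Suc.IH[OF z] by blast
  qed
qed

lemma poly_eq_Ioo: "(\<And>x. -1 < x \<Longrightarrow> x < 1 \<Longrightarrow> poly p x = poly q (x::real)) \<Longrightarrow> p = q"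
proof (rule ccontr)
  assume h: "\<And>x. -1 < x \<Longrightarrow> x < 1 \<Longrightarrow> poly p x = poly q x" and ne: "p \<noteq> q"
  have "p - q \<noteq> 0" using ne by simp
  then have fin: "finite {x. poly (p - q) x = 0}" by (rule poly_roots_finite)
  have sub: "{-1<..<1::real} \<subseteq> {x. poly (p - q) x = 0}"
  proof
    fix x :: real assume "x \<in> {-1<..<1}"
    then show "x \<in> {x. poly (p - q) x = 0}" using h[of x] by simp
  qed
  have "finite {-1<..<1::real}" by (rule finite_subset[OF sub fin])
  then show False using infinite_Ioo[of "-1::real" 1] by simp
qed

lemma cheb_poly: "x \<in> {-1..1} \<Longrightarrow> cheb n x = poly (chebp n) x"
  using chebp_cos[of n "arccos x"] by (simp add: cheb_def)

lemma trig_sum: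
  fixes A :: "nat \<Rightarrow> real"
  defines "b \<equiv> \<lambda>k. if k = 1 then A 0 - A 2 / 2 else (A (k - 1) - A (k + 1)) / 2"
  shows "(\<Sum>m\<le>n. A m * (sin t * cos (real m * t))) =
     (\<Sum>k=1..n+1. b k * sin (real k * t)) + A (n+1) / 2 * sin (real n * t) + A (n+2) / 2 * sin (real (n+1) * t)"
proof (induction n)
  case 0 then show ?case by (simp add: b_def algebra_simps numeral_2_eq_2)
next
  case (Suc n)
  have trig: "sin t * cos (real (n+1) * t) = (sin (real (n+2) * t) - sin (real n * t)) / 2"
  proof -
    have "sin (real (n+2) * t) = sin (real (n+1) * t + t)" by (simp add: algebra_simps)
    moreover have "sin (real n * t) = sin (real (n+1) * t - t)" by (simp add: algebra_simps)
    ultimately show ?thesis by (simp add: sin_add sin_diff)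
  qed
  have bb: "b (Suc (Suc n)) = (A (Suc n) - A (n+3)) / 2" by (simp add: b_def numeral_3_eq_3)
  have s1: "(\<Sum>m\<le>Suc n. A m * (sin t * cos (real m * t))) = (\<Sum>m\<le>n. A m * (sin t * cos (real m * t))) + A (n+1) * (sin t * cos (real (n+1) * t))"
    by simp
  have s2: "(\<Sum>k=1..Suc n+1. b k * sin (real k * t)) = (\<Sum>k=1..n+1. b k * sin (real k * t)) + b (n+2) * sin (real (n+2) * t)"
    by simp
  have e: "Suc n + 1 = n + 2" "Suc n + 2 = n + 3" "real (Suc n) = real (n+1)" by auto
  show ?case unfolding s1 s2 Suc.IH trig e by (simp add: bb field_simps)
qed


theorem theorem3p2:
  fixes M N :: nat and a :: "nat \<Rightarrow> real" and R :: "nat \<Rightarrow> nat \<Rightarrow> real"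
  assumes a_M1: "a (M + 1) = 0" and a_M2: "a (M + 2) = 0"
    and R_def: "\<And>n y. n \<le> N \<Longrightarrow> y \<in> {-1..1} \<Longrightarrow>
                   Rtilde M a n y = (\<Sum>k\<le>M + N + 1. R k n * cheb k y)"
  shows "(\<forall>k. M + 1 < k \<and> k \<le> M + N + 1 \<longrightarrow> R k 0 = 0)
       \<and> (\<forall>k. 2 \<le> k \<and> k \<le> M + 1 \<longrightarrow> R k 0 = (a (k - 1) - a (k + 1)) / (2 * real k))
       \<and> R 1 0 = a 0 - a 2 / 2
       \<and> R 0 0 = (\<Sum>j=1..M + 1. (-1) ^ (j + 1) * R j 0)"
proof -
  define A where "A = (\<lambda>m. if m \<le> M then a m else 0)"
  define b where "b = (\<lambda>k. if k = 1 then A 0 - A 2 / 2 else (A (k - 1) - A (k + 1)) / 2)"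
  define K where "K = M + N + 1"
  define S where "S = (\<lambda>k. if k = 0 then (\<Sum>j=1..M+1. (-1) ^ (j + 1) * (b j / real j)) else b k / real k)"
  define P where "P = (\<Sum>k\<le>K. smult (S k) (chebp k))"
  define F where "F = (\<Sum>m\<le>M. smult (a m) (chebp m))"
  have Aeq: "A m = a m" if "m \<le> M + 2" for m
  proof (cases "m \<le> M")
    case True then show ?thesis by (simp add: A_def)
  next
    case False then have "m = M + 1 \<or> m = M + 2" using that by auto
    then show ?thesis using False a_M1 a_M2 by (auto simp: A_def)
  qed
  have S_hi: "S k = 0" if "M + 1 < k" for k
    using that by (simp add: S_def b_def A_def)
  have S_mid: "S k = (a (k - 1) - a (k + 1)) / (2 * real k)" if "2 \<le> k" "k \<le> M + 1" for k
    using that Aeq[of "k - 1"] Aeq[of "k + 1"] by (simp add: S_def b_def)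
  have S_1: "S 1 = a 0 - a 2 / 2"
    using Aeq[of 0] Aeq[of 2] by (simp add: S_def b_def)
  have S_0: "S 0 = (\<Sum>j=1..M + 1. (-1) ^ (j + 1) * S j)"
    by (auto simp: S_def intro!: sum.cong)
  have Sb: "S k * real k = b k" if "1 \<le> k" for k
    using that by (simp add: S_def)
  have splitK: "(\<Sum>k\<le>K. g k) = g 0 + (\<Sum>k=1..K. g k)" for g :: "nat \<Rightarrow> real"
    by (simp add: atMost_atLeast0 sum.atLeast_Suc_atMost)
  have KM: "M + 1 \<le> K" by (simp add: K_def)

  have hD: "pderiv P = F"
  proof (rule poly_eq_Ioo)
    fix x :: real assume x: "-1 < x" "x < 1"
    define th where "th = arccos x"
    have th: "0 < th" "th < pi" using arccos_lt_bounded[OF x] by (auto simp: th_def)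
    have cth: "cos th = x" using x by (simp add: th_def cos_arccos)
    have sth: "sin th > 0" using th by (simp add: sin_gt_zero)
    have eqf: "(\<lambda>t. poly P (cos t)) = (\<lambda>t. \<Sum>k\<le>K. S k * cos (real k * t))"
      by (simp add: P_def poly_sum chebp_cos)
    have d1: "((\<lambda>t. poly P (cos t)) has_real_derivative poly (pderiv P) (cos th) * (- sin th)) (at th)"
      by (rule DERIV_chain2[OF poly_DERIV DERIV_cos])
    have d2: "((\<lambda>t. \<Sum>k\<le>K. S k * cos (real k * t)) has_real_derivative (\<Sum>k\<le>K. S k * (- sin (real k * th) * real k))) (at th)"
      by (rule DERIV_sum) (auto intro!: derivative_eq_intros)
    have "poly (pderiv P) (cos th) * (- sin th) = (\<Sum>k\<le>K. S k * (- sin (real k * th) * real k))"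
      using d1 d2 unfolding eqf by (rule DERIV_unique)
    then have "poly (pderiv P) (cos th) * sin th = (\<Sum>k\<le>K. S k * real k * sin (real k * th))"
      by (simp add: sum_negf algebra_simps)
    also have "\<dots> = (\<Sum>k=1..K. b k * sin (real k * th))"
      unfolding splitK by (simp add: Sb)
    also have "\<dots> = (\<Sum>m\<le>M + N. A m * (sin th * cos (real m * th)))"
      using trig_sum[where A=A and n="M + N" and t=th] by (simp add: b_def K_def A_def)
    also have "\<dots> = (\<Sum>m\<le>M. A m * (sin th * cos (real m * th)))"
      by (rule sum.mono_neutral_right) (auto simp: A_def)
    also have "\<dots> = sin th * poly F (cos th)"
      by (simp add: F_def poly_sum chebp_cos sum_distrib_left A_def algebra_simps)
    finally have "poly (pderiv P) (cos th) * sin th = poly F (cos th) * sin th" by simp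
    then show "poly (pderiv P) x = poly F x" using sth cth by simp
  qed

  have hP: "poly P (-1) = 0"
  proof -
    have cm: "poly (chebp k) (-1) = (-1) ^ k" for k
      using chebp_cos[of k pi] by (simp add: cos_npi)
    have "poly P (-1) = (\<Sum>k\<le>K. S k * (-1) ^ k)"
      by (simp add: P_def poly_sum cm)
    also have "\<dots> = S 0 + (\<Sum>k=1..K. S k * (-1) ^ k)" using splitK[of "\<lambda>k. S k * (-1) ^ k"] by simp
    also have "(\<Sum>k=1..K. S k * (-1) ^ k) = (\<Sum>k=1..M+1. S k * (-1) ^ k)"
      using KM by (intro sum.mono_neutral_right) (auto simp: S_hi)
    also have "S 0 = - (\<Sum>k=1..M+1. S k * (-1) ^ k)"
      unfolding S_0 by (simp add: sum_negf[symmetric] mult.commute)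
    finally show ?thesis by simp
  qed

  have hInt: "Rtilde M a 0 y = poly P y" if y: "-1 < y" "y < 1" for y
  proof -
    have "Rtilde M a 0 y = integral {-1..y} (\<lambda>t. poly F (y - 1 - t))"
      unfolding Rtilde_def
    proof (rule integral_cong)
      fix t assume t: "t \<in> {-1..y}"
      then have yt: "y - 1 - t \<in> {-1..1}" using y by auto
      show "fM M a (y - 1 - t) * cheb 0 t = poly F (y - 1 - t)"
        using cheb_poly[OF yt] by (simp add: fM_def F_def poly_sum cheb_def[of 0])
    qed
    also have "\<dots> = (- poly P (y - 1 - y)) - (- poly P (y - 1 - (-1)))"
    proof (rule integral_unique, rule fundamental_theorem_of_calculus)
      show "-1 \<le> y" using y by simp
      fix t assume "t \<in> {-1..y}"
      have "((\<lambda>t. poly P (y - 1 - t)) has_real_derivative poly (pderiv P) (y - 1 - t) * (-1)) (at t within {-1..y})"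
        by (rule DERIV_chain2[OF poly_DERIV]) (auto intro!: derivative_eq_intros)
      then have "((\<lambda>t. - poly P (y - 1 - t)) has_real_derivative poly F (y - 1 - t)) (at t within {-1..y})"
        using hD by (auto dest: DERIV_minus)
      then show "((\<lambda>t. - poly P (y - 1 - t)) has_vector_derivative poly F (y - 1 - t)) (at t within {-1..y})"
        by (simp add: has_real_derivative_iff_has_vector_derivative)
    qed
    finally show ?thesis using hP by simp
  qed

  have zero: "(\<Sum>k\<le>K. smult (R k 0 - S k) (chebp k)) = 0"
  proof (rule poly_eq_Ioo)
    fix y :: real assume y: "-1 < y" "y < 1"
    have "(\<Sum>k\<le>K. R k 0 * cheb k y) = poly P y"
      using R_def[of 0 y] hInt[OF y] y by (simp add: K_def)
    then show "poly (\<Sum>k\<le>K. smult (R k 0 - S k) (chebp k)) y = poly 0 y"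
      using y by (simp add: poly_sum P_def cheb_poly algebra_simps sum_subtractf)
  qed
  have RS: "R k 0 = S k" if "k \<le> K" for k
    using cheb_unique[OF zero that] by simp
  show ?thesis
  proof (intro conjI allI impI)
    fix k assume "M + 1 < k \<and> k \<le> M + N + 1"
    then show "R k 0 = 0" using RS S_hi by (simp add: K_def)
  next
    fix k assume k: "2 \<le> k \<and> k \<le> M + 1"
    then show "R k 0 = (a (k - 1) - a (k + 1)) / (2 * real k)" using RS[of k] S_mid[of k] KM by simp
  next
    show "R 1 0 = a 0 - a 2 / 2" using RS[of 1] S_1 KM by simp
  next
    have "(\<Sum>j=1..M + 1. (-1) ^ (j + 1) * R j 0) = (\<Sum>j=1..M + 1. (-1) ^ (j + 1) * S j)"
      using KM by (intro sum.cong) (auto simp: RS)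
    then show "R 0 0 = (\<Sum>j=1..M + 1. (-1) ^ (j + 1) * R j 0)" using RS[of 0] S_0 by simp
  qed
qed
end
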